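(* Let $X,Y\sim\mathcal{N}(0,I_n)$ be independent Gaussian random vectors in $\mathbb{R}^n$ and let $\epsilon\in(0,1)$. Then $$\mathbb{P}\left\{|\langle X,Y\rangle|\ge\sqrt{n^{3/2}/(1-\epsilon)}\right\}\le e^{-\sqrt n/2}+2e^{-\epsilon^2 n/4}.$$ *)

theory Defs
  imports "HOL-Probability.Probability"
begin

end

theory Submission
  imports Defs
begin


lemma ln_ineq:
  fixes e :: real assumes "0 < e" "e < 1"
  shows "e\<^sup>2 / 2 \<le> e / (1 - e) + ln (1 - e)"
proof -
  define f where "f x = x / (1 - x) + ln (1 - x) - x\<^sup>2 / 2" for x :: real
  have d: "(f has_real_derivative (x / (1 - x)\<^sup>2 - x)) (at x)" if "0 \<le> x" "x \<le> e" for x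
  proof -
    have x1: "x < 1" using that assms by simp
    have ne: "1 - x \<noteq> 0" "(1 - x)\<^sup>2 \<noteq> 0" using x1 by auto
    show ?thesis
      unfolding f_def using x1
      apply (auto intro!: derivative_eq_intros)
      using ne apply (simp add: divide_simps)
      apply (simp add: power2_eq_square algebra_simps)
      done
  qed
  have nn: "0 \<le> x / (1 - x)\<^sup>2 - x" if "0 \<le> x" "x \<le> e" for x
  proof -
    have x1: "x < 1" using that assms by simp
    have "(1 - x)\<^sup>2 \<le> 1" using that x1 by (simp add: power2_eq_square mult_le_one)
    hence "x * 1 \<le> x / (1 - x)\<^sup>2"
      using that x1 by (simp add: field_simps mult_left_le)
    thus ?thesis by simp
  qed
  have "f 0 \<le> f e"
    by (rule DERIV_nonneg_imp_nondecreasing[of 0 e f]) (use d nn assms in \<open>auto intro!: exI[of _ "_ / (1 - _)\<^sup>2 - _"]\<close>)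
  thus ?thesis by (simp add: f_def)
qed

lemma std_tail:
  fixes s :: real assumes s: "0 \<le> s"
  shows "(\<integral>\<^sup>+x. ennreal (std_normal_density x) * indicator {x. s \<le> \<bar>x\<bar>} x \<partial>lborel)
         \<le> ennreal (exp (- s\<^sup>2 / 2))"
proof -
  define h1 where "h1 x = (if s \<le> x then std_normal_density (x - s) else 0)" for x
  define h2 where "h2 x = (if x \<le> -s then std_normal_density (x + s) else 0)" for x
  have [measurable]: "h1 \<in> borel_measurable borel" "h2 \<in> borel_measurable borel"
    unfolding h1_def h2_def by measurable
  have pw: "std_normal_density x * indicator {x. s \<le> \<bar>x\<bar>} x \<le> exp (- s\<^sup>2 / 2) * (h1 x + h2 x)" for x
  proof (cases "s \<le> \<bar>x\<bar>")
    case True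
    have key: "exp (- x\<^sup>2 / 2) \<le> exp (- s\<^sup>2 / 2) * exp (- (\<bar>x\<bar> - s)\<^sup>2 / 2)"
    proof -
      have "s * s \<le> s * \<bar>x\<bar>" using True s by (simp add: mult_left_mono)
      hence "- x\<^sup>2 / 2 \<le> - s\<^sup>2 / 2 + - (\<bar>x\<bar> - s)\<^sup>2 / 2"
        by (simp add: power2_eq_square algebra_simps)
      thus ?thesis by (simp add: exp_add[symmetric])
    qed
    have "std_normal_density x \<le> exp (- s\<^sup>2 / 2) * std_normal_density (\<bar>x\<bar> - s)"
      using key unfolding std_normal_density_def by (simp add: field_simps)
    moreover have "std_normal_density (\<bar>x\<bar> - s) \<le> h1 x + h2 x"
    proof (cases "0 \<le> x")
      case True
      hence "h1 x = std_normal_density (\<bar>x\<bar> - s)" using \<open>s \<le> \<bar>x\<bar>\<close> by (simp add: h1_def)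
      moreover have "0 \<le> h2 x" by (simp add: h2_def)
      ultimately show ?thesis by simp
    next
      case False
      hence "h2 x = std_normal_density (\<bar>x\<bar> - s)" using \<open>s \<le> \<bar>x\<bar>\<close>
        by (simp add: h2_def std_normal_density_def power2_eq_square algebra_simps)
      moreover have "0 \<le> h1 x" by (simp add: h1_def)
      ultimately show ?thesis by simp
    qed
    ultimately show ?thesis using True
      by (smt (verit) exp_gt_zero mult_left_mono indicator_simps(1) mem_Collect_eq mult_cancel_left1)
  next
    case False
    thus ?thesis by (simp add: h1_def h2_def)
  qed
  have "(\<integral>\<^sup>+x. ennreal (std_normal_density x) * indicator {x. s \<le> \<bar>x\<bar>} x \<partial>lborel)
      \<le> (\<integral>\<^sup>+x. ennreal (exp (- s\<^sup>2 / 2)) * (ennreal (h1 x) + ennreal (h2 x)) \<partial>lborel)"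
    apply (rule nn_integral_mono)
    using pw
    by (smt (verit) ennreal_indicator ennreal_leI ennreal_mult' ennreal_plus exp_ge_zero h1_def h2_def
        indicator_pos_le normal_density_nonneg)
  also have "\<dots> = ennreal (exp (- s\<^sup>2 / 2)) * ((\<integral>\<^sup>+x. ennreal (h1 x) \<partial>lborel) + (\<integral>\<^sup>+x. ennreal (h2 x) \<partial>lborel))"
    by (simp add: nn_integral_cmult nn_integral_add)
  also have "(\<integral>\<^sup>+x. ennreal (h1 x) \<partial>lborel) = (\<integral>\<^sup>+x. ennreal (h1 (s + 1 * x)) \<partial>lborel)"
    using nn_integral_real_affine[of "\<lambda>x. ennreal (h1 x)" 1 s] by simp
  also have "\<dots> = (\<integral>\<^sup>+x. ennreal (std_normal_density x) * indicator {0..} x \<partial>lborel)"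
    by (rule nn_integral_cong) (simp add: h1_def indicator_def)
  also have "(\<integral>\<^sup>+x. ennreal (h2 x) \<partial>lborel) = (\<integral>\<^sup>+x. ennreal (h2 (- s + 1 * x)) \<partial>lborel)"
    using nn_integral_real_affine[of "\<lambda>x. ennreal (h2 x)" 1 "-s"] by simp
  also have "\<dots> = (\<integral>\<^sup>+x. ennreal (std_normal_density x) * indicator {..0} x \<partial>lborel)"
    by (rule nn_integral_cong) (simp add: h2_def indicator_def)
  also have "(\<integral>\<^sup>+x. ennreal (std_normal_density x) * indicator {0..} x \<partial>lborel)
     + (\<integral>\<^sup>+x. ennreal (std_normal_density x) * indicator {..0} x \<partial>lborel)
     = (\<integral>\<^sup>+x. ennreal (std_normal_density x) + ennreal (std_normal_density 0) * indicator {0} x \<partial>lborel)"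
    apply (subst nn_integral_add[symmetric])
      apply simp apply simp
    apply (rule nn_integral_cong)
    apply (auto simp: indicator_def)
    done
  also have "\<dots> = 1"
    apply (subst nn_integral_add)
      apply simp apply simp
    apply (subst nn_integral_cmult_indicator)
     apply simp
    apply (subst nn_integral_eq_integral)
      apply auto
    done
  finally show ?thesis by simp
qed

lemma normal_tail:
  assumes P: "prob_space M" and W: "distributed M lborel W (normal_density 0 \<sigma>)"
    and sp: "0 < \<sigma>" and a: "0 \<le> a"
  shows "emeasure M {\<omega> \<in> space M. a \<le> \<bar>W \<omega>\<bar>} \<le> ennreal (exp (- a\<^sup>2 / (2 * \<sigma>\<^sup>2)))"
proof -
  interpret prob_space M by (rule P)
  have W': "distributed M lborel (\<lambda>x. (W x - 0) / \<sigma>) std_normal_density"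
    using normal_standard_normal_convert[OF sp, of W 0] W by simp
  have "{\<omega> \<in> space M. a \<le> \<bar>W \<omega>\<bar>} = (\<lambda>x. (W x - 0) / \<sigma>) -` {x. a / \<sigma> \<le> \<bar>x\<bar>} \<inter> space M"
    using sp by (auto simp: field_simps)
  also have "emeasure M \<dots> = (\<integral>\<^sup>+x. ennreal (std_normal_density x) * indicator {x. a / \<sigma> \<le> \<bar>x\<bar>} x \<partial>lborel)"
    by (rule distributed_emeasure[OF W']) simp
  also have "\<dots> \<le> ennreal (exp (- (a / \<sigma>)\<^sup>2 / 2))"
    by (rule std_tail) (use a sp in simp)
  also have "ennreal (exp (- (a / \<sigma>)\<^sup>2 / 2)) = ennreal (exp (- a\<^sup>2 / (2 * \<sigma>\<^sup>2)))"
    by (simp add: power_divide)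
  finally show ?thesis by simp
qed

lemma std_mgf_sq:
  fixes l :: real assumes "0 \<le> l" "l < 1/2"
  shows "(\<integral>\<^sup>+x. ennreal (std_normal_density x) * ennreal (exp (l * x\<^sup>2)) \<partial>lborel)
         = ennreal (1 / sqrt (1 - 2 * l))"
proof -
  define \<sigma> where "\<sigma> = 1 / sqrt (1 - 2 * l)"
  have pos: "0 < 1 - 2 * l" using assms by simp
  have sp: "0 < \<sigma>" using pos by (simp add: \<sigma>_def)
  have s2: "\<sigma>\<^sup>2 = 1 / (1 - 2 * l)" using pos by (simp add: \<sigma>_def power_divide)
  have pw: "std_normal_density x * exp (l * x\<^sup>2) = \<sigma> * normal_density 0 \<sigma> x" for x
  proof -
    have e: "exp (- x\<^sup>2 / 2) * exp (l * x\<^sup>2) = exp (- (x - 0)\<^sup>2 / (2 * \<sigma>\<^sup>2))"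
      unfolding exp_add[symmetric] s2 using pos by (simp add: field_simps)
    have c: "1 / sqrt (2 * pi) = \<sigma> * (1 / sqrt (2 * pi * \<sigma>\<^sup>2))"
      using sp by (simp add: real_sqrt_mult)
    have "std_normal_density x * exp (l * x\<^sup>2) = 1 / sqrt (2 * pi) * (exp (- x\<^sup>2 / 2) * exp (l * x\<^sup>2))"
      by (simp add: std_normal_density_def)
    also have "\<dots> = \<sigma> * (1 / sqrt (2 * pi * \<sigma>\<^sup>2) * exp (- (x - 0)\<^sup>2 / (2 * \<sigma>\<^sup>2)))"
      by (subst c, subst e) simp
    also have "\<dots> = \<sigma> * normal_density 0 \<sigma> x"
      by (simp only: normal_density_def)
    finally show ?thesis .
  qed
  have "(\<integral>\<^sup>+x. ennreal (std_normal_density x) * ennreal (exp (l * x\<^sup>2)) \<partial>lborel)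
      = (\<integral>\<^sup>+x. ennreal \<sigma> * ennreal (normal_density 0 \<sigma> x) \<partial>lborel)"
    by (rule nn_integral_cong) (simp add: ennreal_mult'[symmetric] pw sp less_imp_le)
  also have "\<dots> = ennreal \<sigma> * (\<integral>\<^sup>+x. ennreal (normal_density 0 \<sigma> x) \<partial>lborel)"
    by (simp add: nn_integral_cmult)
  also have "(\<integral>\<^sup>+x. ennreal (normal_density 0 \<sigma> x) \<partial>lborel) = 1"
    using sp by (subst nn_integral_eq_integral) (auto simp: integrable_normal_density integral_normal_density)
  finally show ?thesis by (simp add: \<sigma>_def)
qed



lemma chi_tail:
  fixes Z :: "bool \<times> nat \<Rightarrow> 'a \<Rightarrow> real" and Y :: "nat \<Rightarrow> 'a \<Rightarrow> real"
  assumes P: "prob_space M"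
    and ind: "prob_space.indep_vars M (\<lambda>_. borel) Z (UNIV \<times> {..<n})"
    and ZY: "\<And>i. Z (False, i) = Y i"
    and Yd: "\<And>i. i < n \<Longrightarrow> distributed M lborel (Y i) std_normal_density"
    and e: "0 < \<epsilon>" "\<epsilon> < 1"
  shows "emeasure M {\<omega> \<in> space M. real n / (1 - \<epsilon>) \<le> (\<Sum>i<n. (Y i \<omega>)\<^sup>2)}
         \<le> ennreal (exp (- \<epsilon>\<^sup>2 * real n / 4))"
proof -
  interpret prob_space M by (rule P)
  define l where "l = \<epsilon> / 2"
  define R where "R = real n / (1 - \<epsilon>)"
  define B where "B = {False} \<times> {..<n}"
  define F where "F j \<omega> = exp (l * (Z j \<omega>)\<^sup>2)" for j \<omega>
  have Ym: "Y i \<in> borel_measurable M" if "i < n" for i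
    using Yd[OF that] by (rule distributed_measurable[where N=lborel, simplified])
  define g where "g \<omega> = (\<Sum>i<n. (Y i \<omega>)\<^sup>2)" for \<omega>
  have gm[measurable]: "g \<in> borel_measurable M"
    unfolding g_def by (intro borel_measurable_sum borel_measurable_power) (auto intro: Ym)
  have Aset: "{\<omega> \<in> space M. R \<le> g \<omega>} \<in> sets M" by measurable
  have indF: "indep_vars (\<lambda>_. borel) F B"
  proof -
    have "indep_vars (\<lambda>_. borel) (\<lambda>j \<omega>. (\<lambda>x. exp (l * x\<^sup>2)) (Z j \<omega>)) (UNIV \<times> {..<n})"
      by (rule indep_vars_compose2[OF ind]) simp
    hence "indep_vars (\<lambda>_. borel) F (UNIV \<times> {..<n})" by (simp add: F_def[abs_def])
    thus ?thesis by (rule indep_vars_subset) (auto simp: B_def)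
  qed
  have prodF: "exp (l * g \<omega>) = (\<Prod>j\<in>B. F j \<omega>)" for \<omega>
  proof -
    have "exp (l * g \<omega>) = (\<Prod>i<n. exp (l * (Y i \<omega>)\<^sup>2))"
      by (simp add: g_def sum_distrib_left exp_sum)
    also have "\<dots> = (\<Prod>j\<in>B. F j \<omega>)"
    proof -
      have Bim: "B = (\<lambda>i. (False, i)) ` {..<n}" by (auto simp: B_def)
      show ?thesis unfolding Bim by (subst prod.reindex) (auto simp: inj_on_def F_def ZY)
    qed
    finally show ?thesis .
  qed
  have "emeasure M {\<omega> \<in> space M. R \<le> g \<omega>} = (\<integral>\<^sup>+\<omega>. indicator {\<omega> \<in> space M. R \<le> g \<omega>} \<omega> \<partial>M)"
    using Aset by simp
  also have "\<dots> \<le> (\<integral>\<^sup>+\<omega>. ennreal (exp (- l * R)) * ennreal (\<Prod>j\<in>B. F j \<omega>) \<partial>M)"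
  proof (rule nn_integral_mono)
    fix \<omega> assume "\<omega> \<in> space M"
    have "indicator {\<omega> \<in> space M. R \<le> g \<omega>} \<omega> \<le> exp (- l * R) * exp (l * g \<omega>)"
    proof (cases "R \<le> g \<omega>")
      case True
      hence "0 \<le> - l * R + l * g \<omega>" using e by (simp add: l_def algebra_simps mult_left_mono)
      hence "1 \<le> exp (- l * R + l * g \<omega>)" by simp
      hence "1 \<le> exp (- l * R) * exp (l * g \<omega>)" by (simp only: exp_add)
      thus ?thesis using True \<open>\<omega> \<in> space M\<close> by simp
    qed simp
    thus "indicator {\<omega> \<in> space M. R \<le> g \<omega>} \<omega> \<le> ennreal (exp (- l * R)) * ennreal (\<Prod>j\<in>B. F j \<omega>)"
      by (simp add: prodF[symmetric] ennreal_mult'[symmetric] ennreal_indicator[symmetric] ennreal_leI)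
  qed
  also have "\<dots> = ennreal (exp (- l * R)) * (\<integral>\<^sup>+\<omega>. ennreal (\<Prod>j\<in>B. F j \<omega>) \<partial>M)"
  proof (rule nn_integral_cmult)
    have "(\<lambda>\<omega>. \<Prod>j\<in>B. F j \<omega>) \<in> borel_measurable M"
      using indF by (intro borel_measurable_prod) (auto simp: indep_vars_def)
    thus "(\<lambda>\<omega>. ennreal (\<Prod>j\<in>B. F j \<omega>)) \<in> borel_measurable M" by simp
  qed
  also have "(\<integral>\<^sup>+\<omega>. ennreal (\<Prod>j\<in>B. F j \<omega>) \<partial>M) = (\<Prod>j\<in>B. \<integral>\<^sup>+\<omega>. F j \<omega> \<partial>M)"
  proof -
    have indF': "indep_vars (\<lambda>_. borel) (\<lambda>j \<omega>. ennreal (F j \<omega>)) B"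
      by (rule indep_vars_compose2[OF indF]) simp
    have "(\<integral>\<^sup>+\<omega>. ennreal (\<Prod>j\<in>B. F j \<omega>) \<partial>M) = (\<integral>\<^sup>+\<omega>. (\<Prod>j\<in>B. ennreal (F j \<omega>)) \<partial>M)"
      by (simp add: prod_ennreal F_def)
    also have "\<dots> = (\<Prod>j\<in>B. \<integral>\<^sup>+\<omega>. F j \<omega> \<partial>M)"
      by (rule indep_vars_nn_integral[OF _ indF']) (auto simp: B_def)
    finally show ?thesis .
  qed
  also have "\<dots> = (\<Prod>j\<in>B. ennreal (1 / sqrt (1 - 2 * l)))"
  proof (rule prod.cong)
    fix j assume "j \<in> B"
    then obtain i where j: "j = (False, i)" "i < n" by (auto simp: B_def)
    have "(\<integral>\<^sup>+\<omega>. F j \<omega> \<partial>M) = (\<integral>\<^sup>+\<omega>. ennreal (exp (l * (Y i \<omega>)\<^sup>2)) \<partial>M)"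
      by (simp add: F_def j ZY)
    also have "\<dots> = (\<integral>\<^sup>+x. ennreal (std_normal_density x) * ennreal (exp (l * x\<^sup>2)) \<partial>lborel)"
      by (rule distributed_nn_integral[OF Yd[OF j(2)], symmetric]) simp
    also have "\<dots> = ennreal (1 / sqrt (1 - 2 * l))"
      by (rule std_mgf_sq) (use e in \<open>auto simp: l_def\<close>)
    finally show "(\<integral>\<^sup>+\<omega>. F j \<omega> \<partial>M) = ennreal (1 / sqrt (1 - 2 * l))" .
  qed simp
  also have "\<dots> = ennreal ((1 / sqrt (1 - \<epsilon>)) ^ n)"
    by (simp add: B_def card_cartesian_product l_def) (subst ennreal_power, use e in auto)
  also have "ennreal (exp (- l * R)) * \<dots> = ennreal (exp (- l * R) * (1 / sqrt (1 - \<epsilon>)) ^ n)"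
    by (simp add: ennreal_mult')
  also have "exp (- l * R) * (1 / sqrt (1 - \<epsilon>)) ^ n \<le> exp (- \<epsilon>\<^sup>2 * real n / 4)"
  proof -
    have s: "1 / sqrt (1 - \<epsilon>) = exp (- ln (1 - \<epsilon>) / 2)"
      using e by (simp add: powr_half_sqrt[symmetric] powr_def exp_minus field_simps)
    have p: "(1 / sqrt (1 - \<epsilon>)) ^ n = exp (real n * (- ln (1 - \<epsilon>) / 2))"
      unfolding s exp_of_nat_mult[symmetric] by simp
    have li: "real n * (\<epsilon>\<^sup>2 / 2) \<le> real n * (\<epsilon> / (1 - \<epsilon>) + ln (1 - \<epsilon>))"
      by (rule mult_left_mono[OF ln_ineq[OF e]]) simp
    have "- l * R + real n * (- ln (1 - \<epsilon>) / 2) \<le> - \<epsilon>\<^sup>2 * real n / 4"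
      using li e unfolding l_def R_def by (simp add: field_simps)
    thus ?thesis unfolding p exp_add[symmetric] by simp
  qed
  finally show ?thesis unfolding R_def g_def by (simp add: ennreal_leI)
qed



lemma lin_tail:
  fixes Z :: "bool \<times> nat \<Rightarrow> 'a \<Rightarrow> real" and X :: "nat \<Rightarrow> 'a \<Rightarrow> real" and a :: "nat \<Rightarrow> real"
  assumes P: "prob_space M"
    and ind: "prob_space.indep_vars M (\<lambda>_. borel) Z (UNIV \<times> {..<n})"
    and ZX: "\<And>i. Z (True, i) = X i"
    and Xd: "\<And>i. i < n \<Longrightarrow> distributed M lborel (X i) std_normal_density"
    and t: "0 < t" and R: "0 < R" and aR: "(\<Sum>i<n. (a i)\<^sup>2) \<le> R"
  shows "emeasure M {\<omega> \<in> space M. t \<le> \<bar>\<Sum>i<n. X i \<omega> * a i\<bar>} \<le> ennreal (exp (- t\<^sup>2 / (2 * R)))"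
proof -
  interpret prob_space M by (rule P)
  define J where "J = {i. i < n \<and> a i \<noteq> 0}"
  have sumJ: "(\<Sum>i<n. f i * a i) = (\<Sum>i\<in>J. f i * a i)" for f :: "nat \<Rightarrow> real"
    unfolding J_def by (rule sum.mono_neutral_right) auto
  have sumJ2: "(\<Sum>i<n. (a i)\<^sup>2) = (\<Sum>i\<in>J. (a i)\<^sup>2)"
    unfolding J_def by (rule sum.mono_neutral_right) auto
  show ?thesis
  proof (cases "J = {}")
    case True
    hence "{\<omega> \<in> space M. t \<le> \<bar>\<Sum>i<n. X i \<omega> * a i\<bar>} = {}"
      using t by (simp add: sumJ)
    thus ?thesis by (metis emeasure_empty zero_le)
  next
    case False
    define Jt where "Jt = (\<lambda>i. (True, i)) ` J"
    define V where "V j \<omega> = a (snd j) * Z j \<omega>" for j \<omega>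
    have finJ: "finite J" by (simp add: J_def)
    have indV: "indep_vars (\<lambda>_. borel) V Jt"
    proof -
      have "indep_vars (\<lambda>_. borel) (\<lambda>j \<omega>. (\<lambda>x. a (snd j) * x) (Z j \<omega>)) (UNIV \<times> {..<n})"
        by (rule indep_vars_compose2[OF ind]) simp
      hence "indep_vars (\<lambda>_. borel) V (UNIV \<times> {..<n})" by (simp add: V_def[abs_def])
      thus ?thesis by (rule indep_vars_subset) (auto simp: Jt_def J_def)
    qed
    have Vd: "distributed M lborel (V j) (normal_density 0 \<bar>a (snd j)\<bar>)" if "j \<in> Jt" for j
    proof -
      obtain i where j: "j = (True, i)" "i \<in> J" using \<open>j \<in> Jt\<close> by (auto simp: Jt_def)
      have "distributed M lborel (\<lambda>x. 0 + a i * X i x) (normal_density (0 + a i * 0) (\<bar>a i\<bar> * 1))"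
        by (rule normal_density_affine) (use j Xd in \<open>auto simp: J_def\<close>)
      moreover have "V j = (\<lambda>x. a i * X i x)" by (simp add: V_def[abs_def] j ZX)
      ultimately show ?thesis by (simp add: j)
    qed
    have Sd: "distributed M lborel (\<lambda>\<omega>. \<Sum>j\<in>Jt. V j \<omega>)
        (normal_density (\<Sum>j\<in>Jt. 0) (sqrt (\<Sum>j\<in>Jt. \<bar>a (snd j)\<bar>\<^sup>2)))"
      by (rule sum_indep_normal[OF _ _ indV]) (use False finJ Vd in \<open>auto simp: Jt_def J_def\<close>)
    have sumV: "(\<Sum>j\<in>Jt. V j \<omega>) = (\<Sum>i<n. X i \<omega> * a i)" for \<omega>
      unfolding sumJ Jt_def by (subst sum.reindex) (auto simp: inj_on_def V_def ZX mult.commute)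
    have sumA: "(\<Sum>j\<in>Jt. (a (snd j))\<^sup>2) = (\<Sum>i<n. (a i)\<^sup>2)"
      unfolding sumJ2 Jt_def by (subst sum.reindex) (auto simp: inj_on_def)
    have pos: "0 < (\<Sum>i<n. (a i)\<^sup>2)"
      unfolding sumJ2 using False finJ by (intro sum_pos) (auto simp: J_def)
    have Sd': "distributed M lborel (\<lambda>\<omega>. \<Sum>i<n. X i \<omega> * a i) (normal_density 0 (sqrt (\<Sum>i<n. (a i)\<^sup>2)))"
      using Sd by (simp add: sumV sumA)
    have "emeasure M {\<omega> \<in> space M. t \<le> \<bar>\<Sum>i<n. X i \<omega> * a i\<bar>}
        \<le> ennreal (exp (- t\<^sup>2 / (2 * (sqrt (\<Sum>i<n. (a i)\<^sup>2))\<^sup>2)))"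
      by (rule normal_tail[OF P Sd']) (use pos t in auto)
    also have "\<dots> \<le> ennreal (exp (- t\<^sup>2 / (2 * R)))"
    proof (rule ennreal_leI, subst exp_le_cancel_iff)
      have "t\<^sup>2 / (2 * R) \<le> t\<^sup>2 / (2 * (\<Sum>i<n. (a i)\<^sup>2))"
        using pos aR t by (intro divide_left_mono) auto
      thus "- t\<^sup>2 / (2 * (sqrt (\<Sum>i<n. (a i)\<^sup>2))\<^sup>2) \<le> - t\<^sup>2 / (2 * R)"
        using pos by simp
    qed
    finally show ?thesis .
  qed
qed



theorem lemma5:
  fixes M :: "'a measure" and X Y :: "nat \<Rightarrow> 'a \<Rightarrow> real"
    and n :: nat and \<epsilon> :: real
  assumes "prob_space M"
    and "prob_space.indep_vars M (\<lambda>_. borel)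
           (\<lambda>(b, i). if b then X i else Y i) (UNIV \<times> {..<n})"
    and "\<And>i. i < n \<Longrightarrow> distributed M lborel (X i) std_normal_density"
    and "\<And>i. i < n \<Longrightarrow> distributed M lborel (Y i) std_normal_density"
    and "0 < \<epsilon>" and "\<epsilon> < 1"
  shows "prob_space.prob M
           {\<omega> \<in> space M. \<bar>\<Sum>i<n. X i \<omega> * Y i \<omega>\<bar> \<ge> sqrt (real n powr (3/2) / (1 - \<epsilon>))}
         \<le> exp (- sqrt (real n) / 2) + 2 * exp (- \<epsilon>\<^sup>2 * real n / 4)"
proof -
  note P = assms(1)
  interpret prob_space M by (rule P)
  define Z :: "bool \<times> nat \<Rightarrow> 'a \<Rightarrow> real" where "Z = (\<lambda>(b, i). if b then X i else Y i)"
  have ind: "indep_vars (\<lambda>_. borel) Z (UNIV \<times> {..<n})" using assms(2) by (simp add: Z_def)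
  have ZX: "\<And>i. Z (True, i) = X i" and ZY: "\<And>i. Z (False, i) = Y i" by (simp_all add: Z_def)
  define t where "t = sqrt (real n powr (3/2) / (1 - \<epsilon>))"
  define E where "E = {\<omega> \<in> space M. \<bar>\<Sum>i<n. X i \<omega> * Y i \<omega>\<bar> \<ge> t}"
  define c where "c = exp (- sqrt (real n) / 2)"
  define d where "d = exp (- \<epsilon>\<^sup>2 * real n / 4)"
  have d0: "0 \<le> d" by (simp add: d_def)
  show ?thesis
  proof (cases "n = 0")
    case True
    have "prob E \<le> 1" by simp
    thus ?thesis using True by (simp add: E_def t_def) (simp add: prob_space)
  next
    case False
    define R where "R = real n / (1 - \<epsilon>)"
    have R0: "0 < R" using False assms(5,6) by (simp add: R_def)
    have t0: "0 < t" using False assms(5,6) by (simp add: t_def)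
    have tR: "t\<^sup>2 / (2 * R) = sqrt (real n) / 2"
    proof -
      have "real n powr (3/2) = real n powr (1 + 1/2)" by simp
      also have "\<dots> = real n powr 1 * real n powr (1/2)" by (rule powr_add)
      also have "\<dots> = real n * sqrt (real n)" using False by (simp add: powr_half_sqrt)
      finally have "real n powr (3/2) = real n * sqrt (real n)" .
      thus ?thesis using assms(5,6) False unfolding t_def R_def by (simp add: field_simps)
    qed
    have main: "emeasure M E \<le> ennreal c + ennreal d"
    proof -
      define A where "A = {True} \<times> {..<n}"
      define B where "B = {False} \<times> {..<n}"
      define PA where "PA = PiM A (\<lambda>_::bool \<times> nat. borel :: real measure)"
      define PB where "PB = PiM B (\<lambda>_::bool \<times> nat. borel :: real measure)"
      define xv where "xv \<omega> = restrict (\<lambda>j. Z j \<omega>) A" for \<omega>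
      define yv where "yv \<omega> = restrict (\<lambda>j. Z j \<omega>) B" for \<omega>
      have iv: "indep_var PB yv PA xv"
        using indep_var_restrict[OF ind, of B A]
        by (auto simp: PA_def PB_def xv_def[abs_def] yv_def[abs_def] A_def B_def)
      have ym[measurable]: "yv \<in> measurable M PB" using iv by (rule indep_var_rv1)
      have xm[measurable]: "xv \<in> measurable M PA" using iv by (rule indep_var_rv2)
      have dist: "distr M PB yv \<Otimes>\<^sub>M distr M PA xv = distr M (PB \<Otimes>\<^sub>M PA) (\<lambda>\<omega>. (yv \<omega>, xv \<omega>))"
        using iv indep_var_distribution_eq by blast
      define g where "g p = (\<Sum>i<n. snd p (True, i) * fst p (False, i))" for p :: "((bool \<times> nat \<Rightarrow> real) \<times> (bool \<times> nat \<Rightarrow> real))"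
      have gm[measurable]: "g \<in> borel_measurable (PB \<Otimes>\<^sub>M PA)"
      proof -
        have a: "(\<lambda>p. snd p (True, i)) \<in> borel_measurable (PB \<Otimes>\<^sub>M PA)" if "i < n" for i
          using that unfolding PA_def A_def
          by (intro measurable_compose[OF measurable_snd measurable_component_singleton]) auto
        have b: "(\<lambda>p. fst p (False, i)) \<in> borel_measurable (PB \<Otimes>\<^sub>M PA)" if "i < n" for i
          using that unfolding PB_def B_def
          by (intro measurable_compose[OF measurable_fst measurable_component_singleton]) auto
        show ?thesis unfolding g_def
          by (intro borel_measurable_sum borel_measurable_times a b) auto
      qed
      define S where "S = {p \<in> space (PB \<Otimes>\<^sub>M PA). t \<le> \<bar>g p\<bar>}"
      have Sm: "S \<in> sets (PB \<Otimes>\<^sub>M PA)" unfolding S_def by measurable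
      have E_eq: "E = (\<lambda>\<omega>. (yv \<omega>, xv \<omega>)) -` S \<inter> space M"
      proof -
        have "(yv \<omega>, xv \<omega>) \<in> space (PB \<Otimes>\<^sub>M PA)" if "\<omega> \<in> space M" for \<omega>
          using measurable_space[OF measurable_Pair[OF ym xm] that] .
        moreover have "g (yv \<omega>, xv \<omega>) = (\<Sum>i<n. X i \<omega> * Y i \<omega>)" for \<omega>
          unfolding g_def by (intro sum.cong) (auto simp: xv_def yv_def A_def B_def ZX ZY)
        ultimately show ?thesis unfolding E_def S_def by auto
      qed
      interpret DX: prob_space "distr M PA xv" by (rule prob_space_distr[OF xm])
      interpret DY: prob_space "distr M PB yv" by (rule prob_space_distr[OF ym])
      define Q where "Q = {y \<in> space PB. R \<le> (\<Sum>i<n. (y (False, i))\<^sup>2)}"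
      have Qm: "Q \<in> sets PB"
      proof -
        have "(\<lambda>y. \<Sum>i<n. (y (False, i))\<^sup>2) \<in> borel_measurable PB"
          by (intro borel_measurable_sum borel_measurable_power measurable_component_singleton)
             (auto simp: PB_def B_def)
        thus ?thesis unfolding Q_def by measurable
      qed
      have pw: "emeasure (distr M PA xv) (Pair y -` S) \<le> indicator Q y + ennreal c"
        if y: "y \<in> space (distr M PB yv)" for y
      proof -
        have yB: "y \<in> space PB" using y by simp
        have "emeasure (distr M PA xv) (Pair y -` S) = emeasure M (xv -` (Pair y -` S) \<inter> space M)"
          by (rule emeasure_distr[OF xm sets_Pair1[OF Sm]])
        also have "xv -` (Pair y -` S) \<inter> space M
            = {\<omega> \<in> space M. t \<le> \<bar>\<Sum>i<n. X i \<omega> * y (False, i)\<bar>}"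
        proof -
          have "(y, xv \<omega>) \<in> space (PB \<Otimes>\<^sub>M PA)" if "\<omega> \<in> space M" for \<omega>
            using yB measurable_space[OF xm that] by (simp add: space_pair_measure)
          moreover have "g (y, xv \<omega>) = (\<Sum>i<n. X i \<omega> * y (False, i))" for \<omega>
            unfolding g_def by (intro sum.cong) (auto simp: xv_def A_def ZX)
          ultimately show ?thesis unfolding S_def by auto
        qed
        finally have eq: "emeasure (distr M PA xv) (Pair y -` S)
            = emeasure M {\<omega> \<in> space M. t \<le> \<bar>\<Sum>i<n. X i \<omega> * y (False, i)\<bar>}" .
        show ?thesis
        proof (cases "y \<in> Q")
          case True
          have "emeasure (distr M PA xv) (Pair y -` S) \<le> 1"
            by (simp add: DX.emeasure_eq_measure)
          also have "\<dots> \<le> indicator Q y + ennreal c" using True by simp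
          finally show ?thesis .
        next
          case False
          hence le: "(\<Sum>i<n. (y (False, i))\<^sup>2) \<le> R" using yB by (auto simp: Q_def)
          have "emeasure M {\<omega> \<in> space M. t \<le> \<bar>\<Sum>i<n. X i \<omega> * y (False, i)\<bar>}
              \<le> ennreal (exp (- t\<^sup>2 / (2 * R)))"
            by (rule lin_tail[OF P ind ZX assms(3) t0 R0 le])
          also have "exp (- t\<^sup>2 / (2 * R)) = c" unfolding c_def using tR by simp
          finally show ?thesis unfolding eq by (simp add: add_increasing)
        qed
      qed
      have "emeasure M E = emeasure (distr M (PB \<Otimes>\<^sub>M PA) (\<lambda>\<omega>. (yv \<omega>, xv \<omega>))) S"
        unfolding E_eq by (rule emeasure_distr[symmetric]) (simp_all add: Sm)
      also have "\<dots> = emeasure (distr M PB yv \<Otimes>\<^sub>M distr M PA xv) S" by (simp add: dist)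
      also have "\<dots> = (\<integral>\<^sup>+y. emeasure (distr M PA xv) (Pair y -` S) \<partial>distr M PB yv)"
        by (rule DX.emeasure_pair_measure_alt) (simp add: Sm)
      also have "\<dots> \<le> (\<integral>\<^sup>+y. indicator Q y + ennreal c \<partial>distr M PB yv)"
        by (rule nn_integral_mono) (rule pw)
      also have "\<dots> = emeasure (distr M PB yv) Q + ennreal c"
      proof -
        have "emeasure (distr M PB yv) (space PB) = 1" using DY.emeasure_space_1 by simp
        thus ?thesis using Qm by (simp add: nn_integral_add)
      qed
      also have "emeasure (distr M PB yv) Q = emeasure M {\<omega> \<in> space M. R \<le> (\<Sum>i<n. (Y i \<omega>)\<^sup>2)}"
      proof -
        have "emeasure (distr M PB yv) Q = emeasure M (yv -` Q \<inter> space M)"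
          by (rule emeasure_distr[OF ym Qm])
        also have "yv -` Q \<inter> space M = {\<omega> \<in> space M. R \<le> (\<Sum>i<n. (Y i \<omega>)\<^sup>2)}"
          using measurable_space[OF ym]
          by (auto simp: Q_def yv_def B_def ZY)
        finally show ?thesis .
      qed
      also have "emeasure M {\<omega> \<in> space M. R \<le> (\<Sum>i<n. (Y i \<omega>)\<^sup>2)} \<le> ennreal d"
        unfolding R_def d_def by (rule chi_tail[OF P ind ZY assms(4) assms(5,6)])
      finally show ?thesis by (simp add: add.commute add_right_mono)
    qed
    have "emeasure M E = ennreal (prob E)" by (simp add: emeasure_eq_measure)
    with main have "prob E \<le> c + d"
      by (metis c_def d0 ennreal_le_iff ennreal_plus exp_ge_zero add_nonneg_nonneg)
    hence "prob E \<le> c + 2 * d" using d0 by linarith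
    thus ?thesis unfolding E_def t_def c_def d_def .
  qed
qed

end
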